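(* Let $p,q$ be relatively prime non-zero integers with $q>0$, let $\mu>0$ be an integer, and write $(2\mu-1)q=np+r$ and $(\mu-1)q=kp+t$ with $n,k\in\mathbb Z$ and $r,t\in\{0,\dots,|p|-1\}$. If $r>0$ then $$\sum_{|s|<\mu}\varphi_{[i]}(s)=\begin{cases}\left\lfloor\frac{(2\mu-1)q}{|p|}\right\rfloor+1 & \text{if } i\equiv p-t+j\pmod p\text{ for some } j\in\{0,\dots,r-1\},\\ \left\lfloor\frac{(2\mu-1)q}{|p|}\right\rfloor & \text{otherwise.}\end{cases}$$ If $r=0$ then $\sum_{|s|<\mu}\varphi_{[i]}(s)=\left\lfloor\frac{(2\mu-1)q}{|p|}\right\rfloor$ for all $[i]\in\mathbb Z/p\mathbb Z$.
   Context: For relatively prime non-zero integers $p,q$ and $i\in\mathbb Z$, $\varphi_{[i]}(s)$ denotes the cardinality of $\{n\in\mathbb Z:\lfloor\frac{i+pn}{q}\rfloor=s\}$; it depends only on the class $[i]$ of $i$ mod $p$. *)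

theory Defs
  imports Complex_Main "HOL-Number_Theory.Cong"
begin

definition phi :: "int \<Rightarrow> int \<Rightarrow> int \<Rightarrow> int \<Rightarrow> nat" where
  "phi p q i s = card {n::int. \<lfloor>real_of_int (i + p * n) / real_of_int q\<rfloor> = s}"

end

theory Submission imports Defs begin

definition S :: "int \<Rightarrow> int \<Rightarrow> int \<Rightarrow> int \<Rightarrow> int set" where
  "S p i a b = {n. a \<le> i + p*n \<and> i + p*n < b}"

lemma S_finite: assumes "p \<noteq> 0" shows "finite (S p i a b)"
proof -
  let ?M = "\<bar>a\<bar> + \<bar>b\<bar> + \<bar>i\<bar>"
  have "S p i a b \<subseteq> {-?M..?M}"
  proof
    fix n assume "n \<in> S p i a b"
    hence h: "a \<le> i + p*n" "i + p*n < b" by (auto simp: S_def)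
    have "\<bar>p*n\<bar> \<le> ?M" using h by linarith
    moreover have "\<bar>n\<bar> \<le> \<bar>p*n\<bar>"
    proof -
      have "1 \<le> \<bar>p\<bar>" using assms by linarith
      hence "\<bar>n\<bar>*1 \<le> \<bar>n\<bar>*\<bar>p\<bar>" by (intro mult_left_mono) auto
      thus ?thesis by (simp add: abs_mult mult.commute)
    qed
    ultimately show "n \<in> {-?M..?M}" by auto
  qed
  thus ?thesis by (rule finite_subset) simp
qed

lemma S_uniq: assumes "p > 0" "n \<in> S p i a (a+p)" "m \<in> S p i a (a+p)" shows "n = m"
proof (rule ccontr)
  assume "n \<noteq> m"
  hence "n - m \<ge> 1 \<or> m - n \<ge> 1" by linarith
  moreover have "n - m \<ge> 1 \<Longrightarrow> p*(n-m) \<ge> p*1" using assms(1) by (intro mult_left_mono) auto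
  moreover have "m - n \<ge> 1 \<Longrightarrow> p*(m-n) \<ge> p*1" using assms(1) by (intro mult_left_mono) auto
  ultimately have "p*(n-m) \<ge> p \<or> p*(m-n) \<ge> p" by auto
  thus False using assms(2,3) by (auto simp: S_def algebra_simps)
qed

lemma S_window: assumes "p > 0" shows "card (S p i a (a+p)) = 1"
proof -
  define n0 where "n0 = -((i-a) div p)"
  have e: "i + p*n0 = a + (i-a) mod p" unfolding n0_def
    using div_mult_mod_eq[of "i-a" p] by (simp add: algebra_simps)
  have "n0 \<in> S p i a (a+p)" using e assms by (simp add: S_def)
  hence "S p i a (a+p) = {n0}" using S_uniq[OF assms] by blast
  thus ?thesis by simp
qed

lemma S_base: assumes "p > 0" "0 \<le> r" "r < p"
  shows "card (S p i a (a+r)) = (if \<exists>j\<in>{0..r-1}. [i = a+j] (mod p) then 1 else 0)"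
proof (cases "\<exists>j\<in>{0..r-1}. [i = a+j] (mod p)")
  case True
  then obtain j where j: "j \<in> {0..r-1}" "[i = a+j] (mod p)" by blast
  then obtain m where m: "a + j = i + p*m" using cong_iff_lin by blast
  have "m \<in> S p i a (a+r)" using m j by (simp add: S_def)
  moreover have "S p i a (a+r) \<subseteq> S p i a (a+p)" using assms by (auto simp: S_def)
  ultimately have "S p i a (a+r) = {m}" using S_uniq[OF assms(1)] by blast
  thus ?thesis using True by simp
next
  case False
  have "S p i a (a+r) = {}"
  proof (rule ccontr)
    assume "S p i a (a+r) \<noteq> {}"
    then obtain n where n: "a \<le> i + p*n" "i+p*n < a+r" by (auto simp: S_def)
    hence "i + p*n - a \<in> {0..r-1}" by auto
    moreover have "[i = a + (i+p*n-a)] (mod p)" by (simp add: cong_iff_lin)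
    ultimately show False using False by blast
  qed
  thus ?thesis using False by simp
qed

lemma S_split: assumes "p > 0" "L \<ge> 0"
  shows "card (S p i a (a+p+L)) = 1 + card (S p i (a+p) (a+p+L))"
proof -
  have "S p i a (a+p+L) = S p i a (a+p) \<union> S p i (a+p) (a+p+L)"
    using assms by (auto simp: S_def)
  moreover have "S p i a (a+p) \<inter> S p i (a+p) (a+p+L) = {}" by (auto simp: S_def)
  ultimately show ?thesis using S_window[OF assms(1)] S_finite assms(1)
    by (simp add: card_Un_disjoint)
qed

lemma S_pos: assumes "p > 0" "0 \<le> r" "r < p"
  shows "card (S p i a (a + int N*p + r)) = N + (if \<exists>j\<in>{0..r-1}. [i = a+j] (mod p) then 1 else 0)"
  using assms
proof (induction N arbitrary: a)
  case 0 thus ?case using S_base by simp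
next
  case (Suc N)
  have eq: "a + int (Suc N) * p + r = a + p + (int N * p + r)" by (simp add: algebra_simps)
  have "card (S p i a (a + int (Suc N)*p + r)) = 1 + card (S p i (a+p) (a + p + int N * p + r))"
    unfolding eq using S_split[of p "int N * p + r" i a] Suc.prems by (simp add: add.assoc)
  also have "\<dots> = 1 + N + (if \<exists>j\<in>{0..r-1}. [i = a+p+j] (mod p) then 1 else 0)"
    using Suc.IH[of "a+p"] Suc.prems by simp
  also have "(\<exists>j\<in>{0..r-1}. [i = a+p+j] (mod p)) = (\<exists>j\<in>{0..r-1}. [i = a+j] (mod p))"
  proof -
    have "\<And>j. [i = a+p+j] (mod p) = [i = a+j] (mod p)"
      unfolding cong_def by (metis add.assoc add.commute mod_add_self2)
    thus ?thesis by simp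
  qed
  finally show ?case by simp
qed

lemma S_neg: "S (-p) i a b = uminus ` S p i a b"
proof (rule set_eqI)
  fix n
  have "n \<in> uminus ` S p i a b \<longleftrightarrow> -n \<in> S p i a b" by force
  thus "n \<in> S (-p) i a b \<longleftrightarrow> n \<in> uminus ` S p i a b" by (simp add: S_def)
qed

lemma S_gen: assumes "p \<noteq> 0" "0 \<le> r" "r < \<bar>p\<bar>"
  shows "card (S p i a (a + int N*\<bar>p\<bar> + r)) = N + (if \<exists>j\<in>{0..r-1}. [i = a+j] (mod p) then 1 else 0)"
proof (cases "p > 0")
  case True thus ?thesis using S_pos assms by simp
next
  case False
  hence "S p i a (a + int N*\<bar>p\<bar> + r) = uminus ` S (-p) i a (a + int N*(-p) + r)"
    using S_neg[of "-p"] by simp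
  moreover have "card (uminus ` S (-p) i a (a + int N*(-p) + r)) = card (S (-p) i a (a + int N*(-p) + r))"
    by (rule card_image) (simp add: inj_on_def)
  ultimately show ?thesis using S_pos[of "-p" r i a N] False assms
    by (simp add: cong_iff_dvd_diff)
qed

lemma phi_S: assumes "q > 0" shows "phi p q i s = card (S p i (s*q) (s*q+q))"
proof -
  have "\<And>x::int. (\<lfloor>real_of_int x / real_of_int q\<rfloor> = s) \<longleftrightarrow> (s*q \<le> x \<and> x < s*q+q)"
  proof -
    fix x :: int
    have "(\<lfloor>real_of_int x / real_of_int q\<rfloor> = s) \<longleftrightarrow>
        (real_of_int s * real_of_int q \<le> real_of_int x \<and> real_of_int x < (real_of_int s + 1) * real_of_int q)"
      using assms by (simp add: floor_eq_iff pos_le_divide_eq pos_divide_less_eq)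
    also have "\<dots> \<longleftrightarrow> (s*q \<le> x \<and> x < s*q+q)"
      by (simp add: distrib_right flip: of_int_mult of_int_add)
    finally show "(\<lfloor>real_of_int x / real_of_int q\<rfloor> = s) \<longleftrightarrow> (s*q \<le> x \<and> x < s*q+q)" .
  qed
  hence "{n. \<lfloor>real_of_int (i + p*n) / real_of_int q\<rfloor> = s} = S p i (s*q) (s*q+q)"
    unfolding S_def by blast
  thus ?thesis unfolding phi_def by simp
qed

lemma union_S:
  fixes p q i \<mu> :: int
  assumes "q > 0"
  shows "(\<Union>s\<in>{-(\<mu>-1)..\<mu>-1}. S p i (s*q) (s*q+q)) = S p i (-(\<mu>-1)*q) (\<mu>*q)"
proof (rule set_eqI)
  fix n
  let ?x = "i + p*n"
  show "n \<in> (\<Union>s\<in>{-(\<mu>-1)..\<mu>-1}. S p i (s*q) (s*q+q)) \<longleftrightarrow> n \<in> S p i (-(\<mu>-1)*q) (\<mu>*q)"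
  proof
    assume "n \<in> (\<Union>s\<in>{-(\<mu>-1)..\<mu>-1}. S p i (s*q) (s*q+q))"
    then obtain s where s: "-(\<mu>-1) \<le> s" "s \<le> \<mu>-1" "s*q \<le> ?x" "?x < s*q+q" by (auto simp: S_def)
    have "-(\<mu>-1)*q \<le> s*q" using s assms by (intro mult_right_mono) auto
    moreover have "(s+1)*q \<le> \<mu>*q" using s assms by (intro mult_right_mono) auto
    ultimately show "n \<in> S p i (-(\<mu>-1)*q) (\<mu>*q)" using s by (auto simp: S_def algebra_simps)
  next
    assume h: "n \<in> S p i (-(\<mu>-1)*q) (\<mu>*q)"
    define s where "s = ?x div q"
    have d: "?x = s*q + ?x mod q" "0 \<le> ?x mod q" "?x mod q < q"
      using assms div_mult_mod_eq[of ?x q] by (auto simp: s_def)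
    have "-(\<mu>-1)*q < (s+1)*q" using h d by (auto simp: S_def algebra_simps)
    hence "-(\<mu>-1) < s+1" using assms by (simp add: mult_less_cancel_right)
    moreover have "s*q < \<mu>*q" using h d unfolding S_def mem_Collect_eq by linarith
    hence "s < \<mu>" using assms by (simp add: mult_less_cancel_right)
    ultimately show "n \<in> (\<Union>s\<in>{-(\<mu>-1)..\<mu>-1}. S p i (s*q) (s*q+q))"
      using d by (intro UN_I[of s]) (auto simp: S_def)
  qed
qed

theorem lemma3p1:
  fixes p q \<mu> n k r t i :: int
  assumes "coprime p q" and "p \<noteq> 0" and "q > 0" and "\<mu> > 0"
    and "(2*\<mu> - 1) * q = n * p + r" and "0 \<le> r" and "r \<le> \<bar>p\<bar> - 1"
    and "(\<mu> - 1) * q = k * p + t" and "0 \<le> t" and "t \<le> \<bar>p\<bar> - 1"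
  shows "(r > 0 \<longrightarrow>
            int (\<Sum>s\<in>{s::int. \<bar>s\<bar> < \<mu>}. phi p q i s) =
              (if \<exists>j\<in>{0..r-1}. [i = p - t + j] (mod p)
               then \<lfloor>real_of_int ((2*\<mu> - 1) * q) / real_of_int \<bar>p\<bar>\<rfloor> + 1
               else \<lfloor>real_of_int ((2*\<mu> - 1) * q) / real_of_int \<bar>p\<bar>\<rfloor>))
       \<and> (r = 0 \<longrightarrow>
            int (\<Sum>s\<in>{s::int. \<bar>s\<bar> < \<mu>}. phi p q i s) =
              \<lfloor>real_of_int ((2*\<mu> - 1) * q) / real_of_int \<bar>p\<bar>\<rfloor>)"
proof -
  have pz: "p \<noteq> 0" by fact
  define a where "a = -(\<mu>-1)*q"
  define M where "M = (if p > 0 then n else -n)"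
  have LM: "(2*\<mu> - 1) * q = M * \<bar>p\<bar> + r" using assms(5) by (auto simp: M_def)
  have "M * \<bar>p\<bar> > - \<bar>p\<bar>"
  proof -
    have "(2*\<mu> - 1) * q > 0" using assms(3,4) by simp
    thus ?thesis using LM assms(7) by linarith
  qed
  hence "(-1) * \<bar>p\<bar> < M * \<bar>p\<bar>" by simp
  hence "-1 < M" using pz by (subst (asm) mult_less_cancel_right) auto
  hence M0: "M \<ge> 0" by simp
  define N where "N = nat M"
  have MN: "M = int N" using M0 by (simp add: N_def)
  have fl: "\<lfloor>real_of_int ((2*\<mu> - 1) * q) / real_of_int \<bar>p\<bar>\<rfloor> = int N"
  proof -
    have "\<lfloor>real_of_int ((2*\<mu> - 1) * q) / real_of_int \<bar>p\<bar>\<rfloor> = ((2*\<mu> - 1) * q) div \<bar>p\<bar>"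
      by (rule floor_divide_of_int_eq)
    also have "\<dots> = (r + M * \<bar>p\<bar>) div \<bar>p\<bar>" using LM by (simp add: add.commute)
    also have "\<dots> = r div \<bar>p\<bar> + M" using pz by simp
    also have "r div \<bar>p\<bar> = 0" using assms(6,7) by simp
    finally show ?thesis using MN by simp
  qed
  have setS: "{s::int. \<bar>s\<bar> < \<mu>} = {-(\<mu>-1)..\<mu>-1}" by auto
  have "(\<Sum>s\<in>{s::int. \<bar>s\<bar> < \<mu>}. phi p q i s) = (\<Sum>s\<in>{-(\<mu>-1)..\<mu>-1}. card (S p i (s*q) (s*q+q)))"
    unfolding setS using phi_S[OF assms(3)] by simp
  also have "\<dots> = card (\<Union>s\<in>{-(\<mu>-1)..\<mu>-1}. S p i (s*q) (s*q+q))"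
  proof (rule card_UN_disjoint[symmetric])
    show "finite {-(\<mu>-1)..\<mu>-1}" by simp
    show "\<forall>s\<in>{-(\<mu>-1)..\<mu>-1}. finite (S p i (s*q) (s*q+q))" using S_finite pz by blast
    show "\<forall>s\<in>{-(\<mu>-1)..\<mu>-1}. \<forall>s'\<in>{-(\<mu>-1)..\<mu>-1}. s \<noteq> s' \<longrightarrow> S p i (s*q) (s*q+q) \<inter> S p i (s'*q) (s'*q+q) = {}"
    proof (intro ballI impI)
      fix s s' :: int assume "s \<noteq> s'"
      hence "s + 1 \<le> s' \<or> s' + 1 \<le> s" by linarith
      hence "(s+1)*q \<le> s'*q \<or> (s'+1)*q \<le> s*q" using assms(3) by (auto intro: mult_right_mono)
      thus "S p i (s*q) (s*q+q) \<inter> S p i (s'*q) (s'*q+q) = {}" by (auto simp: S_def algebra_simps)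
    qed
  qed
  also have "\<dots> = card (S p i a (a + int N * \<bar>p\<bar> + r))"
  proof -
    have "\<mu>*q = a + int N * \<bar>p\<bar> + r" using LM MN by (simp add: a_def algebra_simps)
    thus ?thesis using union_S[OF assms(3)] a_def by simp
  qed
  also have "\<dots> = N + (if \<exists>j\<in>{0..r-1}. [i = a+j] (mod p) then 1 else 0)"
    using S_gen[OF pz assms(6)] assms(7) by simp
  finally have cnt: "(\<Sum>s\<in>{s::int. \<bar>s\<bar> < \<mu>}. phi p q i s) = N + (if \<exists>j\<in>{0..r-1}. [i = a+j] (mod p) then 1 else 0)" .
  have ceq: "\<And>j. [i = a+j] (mod p) = [i = p - t + j] (mod p)"
  proof -
    fix j
    have "a + j = (p - t + j) + (-(k+1)) * p" using assms(8) by (simp add: a_def algebra_simps)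
    hence "(a+j) mod p = ((p - t + j) + (-(k+1)) * p) mod p" by (simp only:)
    also have "\<dots> = (p - t + j) mod p" by (rule mod_mult_self1)
    finally have "(a+j) mod p = (p - t + j) mod p" .
    thus "[i = a+j] (mod p) = [i = p - t + j] (mod p)" by (simp add: cong_def)
  qed
  show ?thesis using cnt fl ceq by auto
qed

end
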